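(* In the timely decision problem described in the context, fix $\eta$ and $\nu\in\{0,1\}$. Let $Q^*(\mu,\nu;\eta)=\inf_{\lambda\in\Lambda}Q^*_\lambda(\mu,\nu;\eta)$ and $\bar Q(\mu,\nu;\eta)=\inf_{\hat\theta\in\Theta}\bar Q_{\hat\theta}(\mu,\nu;\eta)$, and let $m_\theta\in\Delta(\Theta)$ denote the vertex (point mass) at $\theta$. Then $\mu\mapsto Q^*(\mu,\nu;\eta)$ is concave on $\Delta(\Theta)$, and $Q^*(m_\theta,\nu;\eta)>\bar Q(m_\theta,\nu;\eta)$ for every $\theta\in\Theta$. Hence the termination set $\mathcal{T}(\eta)=\{\mu\in\Delta(\Theta):Q^*(\mu,\nu;\eta)\ge\bar Q(\mu,\nu;\eta)\}$ is the (disjoint) union of $|\Theta|$ convex regions delimited by the intersection of $Q^*$ and $\bar Q$, and it contains each vertex of the simplex; the (possibly empty) continuation set is its complement $\Delta(\Theta)\setminus\mathcal{T}(\eta)$.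
   Context: $\Theta,\Lambda,\Omega$ finite nonempty; $\Delta(\Theta)$ the simplex. For $\theta\in\Theta,\lambda\in\Lambda$: known distributions $q_{\theta,\lambda}$ on $\Omega$ and $p_{\theta,\lambda}\in(0,1)$. Latent $\theta\sim\mu_0$. Survival $\nu_t$, $\nu_0=1$. At time $t$ with $\nu_t=1$ the agent either commits to a decision $\hat\theta\in\Theta$ (time $\sigma=t$) or performs $\lambda_t\in\Lambda$; given $\theta$, $\nu_{t+1}=0$ w.p. $p_{\theta,\lambda_t}$, else $\nu_{t+1}=1$ and $\omega_{t+1}\sim q_{\theta,\lambda_t}$ is observed. Deadline $\delta=\min\{t:\nu_t=0\}$, $\tau=\min\{\delta,\sigma\}$. Posterior updates: $M(\lambda,\mu,\omega)(\theta)\propto(1-p_{\theta,\lambda})q_{\theta,\lambda}(\omega)\mu(\theta)$ after survival and outcome $\omega$, $\bar M(\lambda,\mu)(\theta)\propto p_{\theta,\lambda}\mu(\theta)$ after death. Costs $c_\lambda>0$; weights $\eta=(\eta_a,\eta_b,\eta_c)$ with positive entries indexed by $\Theta,\Theta,\Lambda$. Loss $\ell=\sum_{\theta'}\eta_{a,\theta'}\mathbf 1\{\theta=\theta',\theta\neq\hat\theta,\tau<\delta\}+\sum_{\theta'}\eta_{b,\theta'}\mathbf 1\{\theta=\theta',\tau=\delta\}+\sum_{t<\tau}\eta_{c,\lambda_t}c_{\lambda_t}$. Strategies map $(\mu_t,\nu_t)$ to distributions on $\Lambda\cup\Theta$; $V^*(\mu,\nu;\eta)$ is the infimum over strategies of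 the expected to-go loss (loss minus already incurred acquisition costs) from posterior $\mu$ and survival state $\nu$. Decision factors: $\bar Q_{\hat\theta}(\mu,\nu;\eta)=(1-\nu)\sum_{\theta'}\eta_{b,\theta'}\mu(\theta')+\nu\sum_{\theta'\neq\hat\theta}\eta_{a,\theta'}\mu(\theta')$. Optimal acquisition factors: $Q^*_\lambda(\mu,\nu;\eta)=(1-\nu)V^*(\mu,0;\eta)+\eta_{c,\lambda}c_\lambda+\nu\big(V^*(\bar M(\lambda,\mu),0;\eta)\sum_{\theta'}p_{\theta',\lambda}\mu(\theta')+\sum_{\omega}V^*(M(\lambda,\mu,\omega),1;\eta)\sum_{\theta'}(1-p_{\theta',\lambda})q_{\theta',\lambda}(\omega)\mu(\theta')\big)$. *)

theory Defs
  imports "HOL-Analysis.Analysis" "HOL-Probability.Probability"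
begin

text \<open>Latent state type 'th (= Theta), acquisition actions 'la (= Lambda),
  outcomes 'om (= Omega), all finite (and automatically nonempty). Parameters:
  p :: 'th => 'la => real  (death probability p_{theta,lambda}),
  q :: 'th => 'la => 'om pmf  (outcome distribution q_{theta,lambda}),
  c :: 'la => real  (acquisition cost), and weights ea, eb :: 'th => real, ec :: 'la => real
  (the components eta_a, eta_b, eta_c of eta).  The survival state nu is a nat (0 or 1).\<close>

definition belief_simplex :: "(real^'th::finite) set" where
  "belief_simplex = {mu. (\<forall>i. 0 \<le> mu $ i) \<and> (\<Sum>i\<in>UNIV. mu $ i) = 1}"

definition vertex :: "'th::finite \<Rightarrow> real^'th" where
  "vertex th = axis th 1"

text \<open>Posterior after survival with outcome om, and after death.\<close>
definition Mpost :: "('th::finite \<Rightarrow> 'la \<Rightarrow> real) \<Rightarrow> ('th \<Rightarrow> 'la \<Rightarrow> 'om pmf)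
    \<Rightarrow> 'la \<Rightarrow> real^'th \<Rightarrow> 'om \<Rightarrow> real^'th" where
  "Mpost p q l mu om = (\<chi> th. (1 - p th l) * pmf (q th l) om * mu $ th /
      (\<Sum>th'\<in>UNIV. (1 - p th' l) * pmf (q th' l) om * mu $ th'))"

definition Mbar :: "('th::finite \<Rightarrow> 'la \<Rightarrow> real) \<Rightarrow> 'la \<Rightarrow> real^'th \<Rightarrow> real^'th" where
  "Mbar p l mu = (\<chi> th. p th l * mu $ th / (\<Sum>th'\<in>UNIV. p th' l * mu $ th'))"

text \<open>A (stationary, randomized) strategy maps the posterior and survival state to a
  distribution over actions: Inl lambda = acquire with lambda, Inr theta-hat = commit to theta-hat.\<close>
type_synonym ('th, 'la) strategy = "real^'th \<Rightarrow> nat \<Rightarrow> ('la + 'th) pmf"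

text \<open>Process state: (true theta, current posterior, survival state, stopped-flag).\<close>
definition step :: "('th::finite \<Rightarrow> 'la \<Rightarrow> real) \<Rightarrow> ('th \<Rightarrow> 'la \<Rightarrow> 'om pmf) \<Rightarrow> ('la \<Rightarrow> real)
    \<Rightarrow> ('th \<Rightarrow> real) \<Rightarrow> ('th \<Rightarrow> real) \<Rightarrow> ('la \<Rightarrow> real) \<Rightarrow> ('th, 'la) strategy
    \<Rightarrow> 'th \<times> (real^'th) \<times> nat \<times> bool \<Rightarrow> (real \<times> ('th \<times> (real^'th) \<times> nat \<times> bool)) pmf" where
  "step p q c ea eb ec \<pi> s = (case s of (th, mu, nu, dn) \<Rightarrow>
     if dn then return_pmf (0, (th, mu, nu, True))
     else if nu = 0 then return_pmf (eb th, (th, mu, nu, True))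
     else \<pi> mu nu \<bind> (\<lambda>a. case a of
         Inr th' \<Rightarrow> return_pmf (if th = th' then 0 else ea th, (th, mu, nu, True))
       | Inl l \<Rightarrow> bernoulli_pmf (p th l) \<bind> (\<lambda>d.
           if d then return_pmf (ec l * c l, (th, Mbar p l mu, 0, False))
           else map_pmf (\<lambda>om. (ec l * c l, (th, Mpost p q l mu om, 1, False))) (q th l))))"

primrec state_dist :: "('th::finite \<Rightarrow> 'la \<Rightarrow> real) \<Rightarrow> ('th \<Rightarrow> 'la \<Rightarrow> 'om pmf) \<Rightarrow> ('la \<Rightarrow> real)
    \<Rightarrow> ('th \<Rightarrow> real) \<Rightarrow> ('th \<Rightarrow> real) \<Rightarrow> ('la \<Rightarrow> real) \<Rightarrow> ('th, 'la) strategy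
    \<Rightarrow> 'th \<times> (real^'th) \<times> nat \<times> bool \<Rightarrow> nat \<Rightarrow> ('th \<times> (real^'th) \<times> nat \<times> bool) pmf" where
  "state_dist p q c ea eb ec \<pi> s 0 = return_pmf s"
| "state_dist p q c ea eb ec \<pi> s (Suc t) =
     state_dist p q c ea eb ec \<pi> s t \<bind> (\<lambda>s'. map_pmf snd (step p q c ea eb ec \<pi> s'))"

definition loss_given :: "('th::finite \<Rightarrow> 'la \<Rightarrow> real) \<Rightarrow> ('th \<Rightarrow> 'la \<Rightarrow> 'om pmf) \<Rightarrow> ('la \<Rightarrow> real)
    \<Rightarrow> ('th \<Rightarrow> real) \<Rightarrow> ('th \<Rightarrow> real) \<Rightarrow> ('la \<Rightarrow> real) \<Rightarrow> ('th, 'la) strategy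
    \<Rightarrow> 'th \<times> (real^'th) \<times> nat \<times> bool \<Rightarrow> ennreal" where
  "loss_given p q c ea eb ec \<pi> s = (\<Sum>t. ennreal (measure_pmf.expectation
      (state_dist p q c ea eb ec \<pi> s t)
      (\<lambda>s'. measure_pmf.expectation (step p q c ea eb ec \<pi> s') fst)))"

definition togo :: "('th::finite \<Rightarrow> 'la \<Rightarrow> real) \<Rightarrow> ('th \<Rightarrow> 'la \<Rightarrow> 'om pmf) \<Rightarrow> ('la \<Rightarrow> real)
    \<Rightarrow> ('th \<Rightarrow> real) \<Rightarrow> ('th \<Rightarrow> real) \<Rightarrow> ('la \<Rightarrow> real) \<Rightarrow> ('th, 'la) strategy
    \<Rightarrow> real^'th \<Rightarrow> nat \<Rightarrow> ennreal" where
  "togo p q c ea eb ec \<pi> mu nu =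
     (\<Sum>th\<in>UNIV. ennreal (mu $ th) * loss_given p q c ea eb ec \<pi> (th, mu, nu, False))"

text \<open>Optimal value V^*(mu,nu;eta): infimum over strategies (finite, bounded by max eta_a).\<close>
definition Vstar :: "('th::finite \<Rightarrow> 'la \<Rightarrow> real) \<Rightarrow> ('th \<Rightarrow> 'la \<Rightarrow> 'om pmf) \<Rightarrow> ('la \<Rightarrow> real)
    \<Rightarrow> ('th \<Rightarrow> real) \<Rightarrow> ('th \<Rightarrow> real) \<Rightarrow> ('la \<Rightarrow> real) \<Rightarrow> real^'th \<Rightarrow> nat \<Rightarrow> real" where
  "Vstar p q c ea eb ec mu nu = enn2real (INF \<pi>. togo p q c ea eb ec \<pi> mu nu)"

definition Qbar_dec :: "('th::finite \<Rightarrow> real) \<Rightarrow> ('th \<Rightarrow> real) \<Rightarrow> 'th \<Rightarrow> real^'th \<Rightarrow> nat \<Rightarrow> real" where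
  "Qbar_dec ea eb thh mu nu = (1 - real nu) * (\<Sum>th'\<in>UNIV. eb th' * mu $ th')
      + real nu * (\<Sum>th'\<in>UNIV - {thh}. ea th' * mu $ th')"

definition Qstar_acq :: "('th::finite \<Rightarrow> 'la \<Rightarrow> real) \<Rightarrow> ('th \<Rightarrow> 'la \<Rightarrow> 'om::finite pmf) \<Rightarrow> ('la \<Rightarrow> real)
    \<Rightarrow> ('th \<Rightarrow> real) \<Rightarrow> ('th \<Rightarrow> real) \<Rightarrow> ('la \<Rightarrow> real) \<Rightarrow> 'la \<Rightarrow> real^'th \<Rightarrow> nat \<Rightarrow> real" where
  "Qstar_acq p q c ea eb ec l mu nu =
     (1 - real nu) * Vstar p q c ea eb ec mu 0 + ec l * c l
     + real nu * (Vstar p q c ea eb ec (Mbar p l mu) 0 * (\<Sum>th'\<in>UNIV. p th' l * mu $ th')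
        + (\<Sum>om\<in>UNIV. Vstar p q c ea eb ec (Mpost p q l mu om) 1
              * (\<Sum>th'\<in>UNIV. (1 - p th' l) * pmf (q th' l) om * mu $ th')))"

definition Qstar :: "('th::finite \<Rightarrow> 'la::finite \<Rightarrow> real) \<Rightarrow> ('th \<Rightarrow> 'la \<Rightarrow> 'om::finite pmf) \<Rightarrow> ('la \<Rightarrow> real)
    \<Rightarrow> ('th \<Rightarrow> real) \<Rightarrow> ('th \<Rightarrow> real) \<Rightarrow> ('la \<Rightarrow> real) \<Rightarrow> real^'th \<Rightarrow> nat \<Rightarrow> real" where
  "Qstar p q c ea eb ec mu nu = (INF l. Qstar_acq p q c ea eb ec l mu nu)"

definition Qbar :: "('th::finite \<Rightarrow> real) \<Rightarrow> ('th \<Rightarrow> real) \<Rightarrow> real^'th \<Rightarrow> nat \<Rightarrow> real" where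
  "Qbar ea eb mu nu = (INF thh. Qbar_dec ea eb thh mu nu)"

definition termination_set :: "('th::finite \<Rightarrow> 'la::finite \<Rightarrow> real) \<Rightarrow> ('th \<Rightarrow> 'la \<Rightarrow> 'om::finite pmf)
    \<Rightarrow> ('la \<Rightarrow> real) \<Rightarrow> ('th \<Rightarrow> real) \<Rightarrow> ('th \<Rightarrow> real) \<Rightarrow> ('la \<Rightarrow> real) \<Rightarrow> nat \<Rightarrow> (real^'th) set" where
  "termination_set p q c ea eb ec nu =
     {mu \<in> belief_simplex. Qstar p q c ea eb ec mu nu \<ge> Qbar ea eb mu nu}"

end

theory Submission
  imports Defs
begin

lemma exp_bind_fin:
  fixes h :: "'b \<Rightarrow> real"
  assumes fb: "finite (set_pmf (bind_pmf M N))" and fm: "finite (set_pmf M)"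
  shows "measure_pmf.expectation (bind_pmf M N) h
       = measure_pmf.expectation M (\<lambda>x. measure_pmf.expectation (N x) h)"
proof -
  let ?A = "set_pmf (bind_pmf M N)" and ?B = "set_pmf M"
  have pb: "pmf (bind_pmf M N) y = (\<Sum>x\<in>?B. pmf (N x) y * pmf M x)" for y
    unfolding pmf_bind by (rule integral_measure_pmf_real[OF fm]) auto
  have sub: "x \<in> ?B \<Longrightarrow> set_pmf (N x) \<subseteq> ?A" for x by (auto simp: set_bind_pmf)
  have "measure_pmf.expectation (bind_pmf M N) h = (\<Sum>y\<in>?A. h y * pmf (bind_pmf M N) y)"
    by (rule integral_measure_pmf_real[OF fb]) auto
  also have "\<dots> = (\<Sum>y\<in>?A. \<Sum>x\<in>?B. h y * pmf (N x) y * pmf M x)"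
    by (simp add: pb sum_distrib_left mult.assoc)
  also have "\<dots> = (\<Sum>x\<in>?B. (\<Sum>y\<in>?A. h y * pmf (N x) y) * pmf M x)"
    by (subst sum.swap) (simp add: sum_distrib_right)
  also have "\<dots> = (\<Sum>x\<in>?B. measure_pmf.expectation (N x) h * pmf M x)"
  proof (rule sum.cong[OF refl])
    fix x assume x: "x \<in> ?B"
    have "measure_pmf.expectation (N x) h = (\<Sum>y\<in>?A. h y * pmf (N x) y)"
      by (rule integral_measure_pmf_real[OF fb]) (use sub[OF x] in auto)
    then show "(\<Sum>y\<in>?A. h y * pmf (N x) y) * pmf M x = measure_pmf.expectation (N x) h * pmf M x"
      by simp
  qed
  also have "\<dots> = measure_pmf.expectation M (\<lambda>x. measure_pmf.expectation (N x) h)"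
    by (rule integral_measure_pmf_real[OF fm, symmetric]) auto
  finally show ?thesis .
qed

lemma exp_finite_UNIV:
  fixes h :: "'a::finite \<Rightarrow> real"
  shows "measure_pmf.expectation M h = (\<Sum>a\<in>UNIV. pmf M a * h a)"
  by (subst integral_measure_pmf_real[of UNIV]) (auto simp: mult.commute)

lemma E_bind_U:
  fixes h :: "'b \<Rightarrow> real" and M :: "'a::finite pmf"
  assumes "\<And>a. finite (set_pmf (N a))"
  shows "measure_pmf.expectation (bind_pmf M N) h = (\<Sum>a\<in>UNIV. pmf M a * measure_pmf.expectation (N a) h)"
proof -
  have "finite (set_pmf (bind_pmf M N))" using assms by (auto simp: set_bind_pmf)
  then show ?thesis by (simp add: exp_bind_fin exp_finite_UNIV)
qed

locale tdp =
  fixes p :: "'th::finite \<Rightarrow> 'la::finite \<Rightarrow> real"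
    and q :: "'th \<Rightarrow> 'la \<Rightarrow> 'om::finite pmf"
    and c :: "'la \<Rightarrow> real"
    and ea eb :: "'th \<Rightarrow> real" and ec :: "'la \<Rightarrow> real"
  assumes p_bounds: "\<And>th l. 0 < p th l \<and> p th l < 1"
    and c_pos: "\<And>l. 0 < c l"
    and ea_pos: "\<And>th. 0 < ea th" and eb_pos: "\<And>th. 0 < eb th" and ec_pos: "\<And>l. 0 < ec l"
begin

abbreviation "stp \<equiv> step p q c ea eb ec"
abbreviation "sd \<equiv> state_dist p q c ea eb ec"

lemma fin_step: "finite (set_pmf (stp \<pi> s))"
proof -
  obtain th mu nu dn where s: "s = (th, mu, nu, dn)" by (cases s) auto
  show ?thesis unfolding s step_def
    by (auto simp: set_bind_pmf split: sum.splits intro!: finite_UN_I)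
qed

lemma fin_sd: "finite (set_pmf (sd \<pi> s t))"
  by (induction t) (auto simp: set_bind_pmf fin_step intro!: finite_UN_I)

lemma sd_Suc': "sd \<pi> s (Suc t) = stp \<pi> s \<bind> (\<lambda>x. sd \<pi> (snd x) t)"
proof (induction t)
  case 0
  then show ?case by (simp add: bind_return_pmf map_pmf_def)
next
  case (Suc t)
  have "sd \<pi> s (Suc (Suc t)) = sd \<pi> s (Suc t) \<bind> (\<lambda>s'. map_pmf snd (stp \<pi> s'))"
    by (simp only: state_dist.simps)
  also have "\<dots> = (stp \<pi> s \<bind> (\<lambda>x. sd \<pi> (snd x) t)) \<bind> (\<lambda>s'. map_pmf snd (stp \<pi> s'))"
    by (simp only: Suc)
  also have "\<dots> = stp \<pi> s \<bind> (\<lambda>x. sd \<pi> (snd x) t \<bind> (\<lambda>s'. map_pmf snd (stp \<pi> s')))"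
    by (rule bind_assoc_pmf)
  also have "\<dots> = stp \<pi> s \<bind> (\<lambda>x. sd \<pi> (snd x) (Suc t))"
    by (simp only: state_dist.simps)
  finally show ?case .
qed

definition S :: "('th, 'la) strategy \<Rightarrow> nat \<Rightarrow> 'th \<times> (real^'th) \<times> nat \<times> bool \<Rightarrow> real" where
  "S \<pi> n s = (\<Sum>t<n. measure_pmf.expectation (sd \<pi> s t)
      (\<lambda>s'. measure_pmf.expectation (stp \<pi> s') fst))"

lemma S_0[simp]: "S \<pi> 0 s = 0" by (simp add: S_def)

lemma S_Suc: "S \<pi> (Suc n) s = measure_pmf.expectation (stp \<pi> s) (\<lambda>x. fst x + S \<pi> n (snd x))"
proof -
  let ?e = "\<lambda>s'. measure_pmf.expectation (stp \<pi> s') fst"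
  have "S \<pi> (Suc n) s = ?e s + (\<Sum>t<n. measure_pmf.expectation (sd \<pi> s (Suc t)) ?e)"
    unfolding S_def by (subst sum.lessThan_Suc_shift) simp
  also have "(\<Sum>t<n. measure_pmf.expectation (sd \<pi> s (Suc t)) ?e)
      = (\<Sum>t<n. measure_pmf.expectation (stp \<pi> s) (\<lambda>x. measure_pmf.expectation (sd \<pi> (snd x) t) ?e))"
    unfolding sd_Suc' by (intro sum.cong refl exp_bind_fin fin_step) (metis fin_sd sd_Suc')
  also have "\<dots> = measure_pmf.expectation (stp \<pi> s) (\<lambda>x. S \<pi> n (snd x))"
    unfolding S_def by (simp add: integrable_measure_pmf_finite fin_step)
  also have "?e s + \<dots> = measure_pmf.expectation (stp \<pi> s) (\<lambda>x. fst x + S \<pi> n (snd x))"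
    by (subst Bochner_Integration.integral_add) (simp_all add: integrable_measure_pmf_finite fin_step)
  finally show ?thesis .
qed

lemma stp_done: "stp \<pi> (th, mu, nu, True) = return_pmf (0, (th, mu, nu, True))"
  by (simp add: step_def)

lemma sd_done: "sd \<pi> (th, mu, nu, True) t = return_pmf (th, mu, nu, True)"
  by (induction t) (simp_all add: stp_done bind_return_pmf)

lemma S_done[simp]: "S \<pi> n (th, mu, nu, True) = 0"
  by (simp add: S_def sd_done stp_done)

lemma S_nu0: "S \<pi> (Suc n) (th, mu, 0, False) = eb th"
  by (simp add: S_Suc step_def)

lemma S_nu1:
  assumes "nu \<noteq> 0"
  shows "S \<pi> (Suc n) (th, mu, nu, False) = (\<Sum>a\<in>UNIV. pmf (\<pi> mu nu) a * (case a of
      Inr thh \<Rightarrow> (if th = thh then 0 else ea th)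
    | Inl l \<Rightarrow> p th l * (ec l * c l + S \<pi> n (th, Mbar p l mu, 0, False))
        + (1 - p th l) * (\<Sum>om\<in>UNIV. pmf (q th l) om * (ec l * c l + S \<pi> n (th, Mpost p q l mu om, 1, False)))))"
proof -
  have pb: "0 \<le> p th l" "p th l \<le> 1" for l using p_bounds[of th l] by auto
  show ?thesis
    unfolding S_Suc using assms
    apply (simp add: step_def)
    apply (subst E_bind_U)
     apply (auto simp: set_bind_pmf split: sum.splits)[1]
    apply (intro sum.cong refl)
    apply (auto split: sum.splits simp: E_bind_U pb UNIV_bool exp_finite_UNIV[of "q _ _"])
    done
qed

definition Zw :: "('th \<Rightarrow> real) \<Rightarrow> real^'th \<Rightarrow> real" where
  "Zw w mu = (\<Sum>th\<in>UNIV. w th * mu $ th)"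
definition Mw :: "('th \<Rightarrow> real) \<Rightarrow> real^'th \<Rightarrow> real^'th" where
  "Mw w mu = (\<chi> th. w th * mu $ th / Zw w mu)"
definition wd :: "'la \<Rightarrow> 'th \<Rightarrow> real" where "wd l = (\<lambda>th. p th l)"
definition wo :: "'la \<Rightarrow> 'om \<Rightarrow> 'th \<Rightarrow> real" where
  "wo l om = (\<lambda>th. (1 - p th l) * pmf (q th l) om)"

lemma Mbar_eq: "Mbar p l mu = Mw (wd l) mu"
  by (simp add: Mbar_def Mw_def Zw_def wd_def)
lemma Mpost_eq: "Mpost p q l mu om = Mw (wo l om) mu"
  by (simp add: Mpost_def Mw_def Zw_def wo_def)

lemma wd_nn: "0 \<le> wd l th" using p_bounds[of th l] by (simp add: wd_def)
lemma wo_nn: "0 \<le> wo l om th" using p_bounds[of th l] by (simp add: wo_def)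

definition G :: "('th, 'la) strategy \<Rightarrow> nat \<Rightarrow> real^'th \<Rightarrow> nat \<Rightarrow> real" where
  "G \<pi> n mu nu = (\<Sum>th\<in>UNIV. mu $ th * S \<pi> n (th, mu, nu, False))"

definition E0 :: "real^'th \<Rightarrow> real" where "E0 mu = (\<Sum>th\<in>UNIV. eb th * mu $ th)"

definition ActCost :: "(real^'th \<Rightarrow> nat \<Rightarrow> real) \<Rightarrow> real^'th \<Rightarrow> 'la + 'th \<Rightarrow> real" where
  "ActCost f mu a = (case a of
      Inr thh \<Rightarrow> (\<Sum>th\<in>UNIV - {thh}. ea th * mu $ th)
    | Inl l \<Rightarrow> ec l * c l + Zw (wd l) mu * f (Mw (wd l) mu) 0
         + (\<Sum>om\<in>UNIV. Zw (wo l om) mu * f (Mw (wo l om) mu) 1))"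

lemma G_0[simp]: "G \<pi> 0 mu nu = 0" by (simp add: G_def)

lemma G_Suc0: "G \<pi> (Suc n) mu 0 = E0 mu"
  by (simp add: G_def S_nu0 E0_def mult.commute)

lemma bayes:
  assumes w: "\<And>th. 0 \<le> w th" and mu: "\<And>th. 0 \<le> mu $ th"
  shows "(\<Sum>th\<in>UNIV. mu $ th * w th * F th) = Zw w mu * (\<Sum>th\<in>UNIV. Mw w mu $ th * F th)"
proof (cases "Zw w mu = 0")
  case True
  have "\<forall>th\<in>UNIV. w th * mu $ th = 0"
    using True unfolding Zw_def by (subst sum_nonneg_eq_0_iff[symmetric]) (auto intro: mult_nonneg_nonneg w mu)
  then have "(\<Sum>th\<in>UNIV. mu $ th * w th * F th) = 0"
    by (intro sum.neutral) (auto simp: mult.commute)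
  then show ?thesis using True by simp
next
  case False
  then show ?thesis
    by (simp add: Mw_def sum_distrib_left field_simps)
qed

lemma simplex_nn: "mu \<in> belief_simplex \<Longrightarrow> 0 \<le> mu $ th"
  by (simp add: belief_simplex_def)
lemma simplex_sum: "mu \<in> belief_simplex \<Longrightarrow> (\<Sum>th\<in>UNIV. mu $ th) = 1"
  by (simp add: belief_simplex_def)

lemma sum_q: "(\<Sum>om\<in>UNIV. pmf (q th l) om) = 1"
  by (rule sum_pmf_eq_1) auto

lemma G_Suc1:
  assumes mu: "mu \<in> belief_simplex"
  shows "G \<pi> (Suc n) mu 1 = (\<Sum>a\<in>UNIV. pmf (\<pi> mu 1) a * ActCost (G \<pi> n) mu a)"
proof -
  define X where "X th a = (case a of
      Inr thh \<Rightarrow> (if th = thh then 0 else ea th)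
    | Inl l \<Rightarrow> p th l * (ec l * c l + S \<pi> n (th, Mbar p l mu, 0, False))
        + (1 - p th l) * (\<Sum>om\<in>UNIV. pmf (q th l) om * (ec l * c l + S \<pi> n (th, Mpost p q l mu om, 1, False))))" for th a
  have "G \<pi> (Suc n) mu 1 = (\<Sum>th\<in>UNIV. mu $ th * (\<Sum>a\<in>UNIV. pmf (\<pi> mu 1) a * X th a))"
    unfolding G_def by (simp add: S_nu1 X_def)
  also have "\<dots> = (\<Sum>a\<in>UNIV. pmf (\<pi> mu 1) a * (\<Sum>th\<in>UNIV. mu $ th * X th a))"
    by (simp add: sum_distrib_left mult.left_commute) (rule sum.swap)
  also have "\<dots> = (\<Sum>a\<in>UNIV. pmf (\<pi> mu 1) a * ActCost (G \<pi> n) mu a)"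
  proof (intro sum.cong refl arg_cong2[where f="(*)"])
    fix a
    show "(\<Sum>th\<in>UNIV. mu $ th * X th a) = ActCost (G \<pi> n) mu a"
    proof (cases a)
      case (Inr thh)
      have "(\<Sum>th\<in>UNIV. mu $ th * X th a) = (\<Sum>th\<in>UNIV. if th = thh then 0 else ea th * mu $ th)"
        by (intro sum.cong) (auto simp: X_def Inr)
      also have "\<dots> = (\<Sum>th\<in>UNIV - {thh}. ea th * mu $ th)"
        by (subst sum.If_cases) (auto simp: Compl_eq_Diff_UNIV)
      finally show ?thesis by (simp add: ActCost_def Inr)
    next
      case (Inl l)
      let ?K = "ec l * c l"
      let ?S0 = "\<lambda>th. S \<pi> n (th, Mbar p l mu, 0, False)"
      let ?S1 = "\<lambda>th om. S \<pi> n (th, Mpost p q l mu om, 1, False)"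
      have inner: "mu $ th * X th a = ?K * mu $ th + mu $ th * wd l th * ?S0 th
          + (\<Sum>om\<in>UNIV. mu $ th * wo l om th * ?S1 th om)" for th
      proof -
        have "(\<Sum>om\<in>UNIV. pmf (q th l) om * (?K + ?S1 th om))
            = ?K * (\<Sum>om\<in>UNIV. pmf (q th l) om) + (\<Sum>om\<in>UNIV. pmf (q th l) om * ?S1 th om)"
          by (simp add: algebra_simps sum.distrib sum_distrib_left)
        then have e: "(\<Sum>om\<in>UNIV. pmf (q th l) om * (?K + ?S1 th om))
            = ?K + (\<Sum>om\<in>UNIV. pmf (q th l) om * ?S1 th om)" by (simp add: sum_q)
        have "mu $ th * X th a = mu $ th * (p th l * (?K + ?S0 th) + (1 - p th l) * (?K + (\<Sum>om\<in>UNIV. pmf (q th l) om * ?S1 th om)))"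
          by (simp only: X_def Inl sum.case e)
        also have "\<dots> = ?K * mu $ th + mu $ th * wd l th * ?S0 th
          + (\<Sum>om\<in>UNIV. mu $ th * wo l om th * ?S1 th om)"
          by (simp add: wd_def wo_def sum_distrib_left algebra_simps)
        finally show ?thesis .
      qed
      have "(\<Sum>th\<in>UNIV. mu $ th * X th a) = ?K * (\<Sum>th\<in>UNIV. mu $ th)
          + (\<Sum>th\<in>UNIV. mu $ th * wd l th * ?S0 th)
          + (\<Sum>om\<in>UNIV. \<Sum>th\<in>UNIV. mu $ th * wo l om th * ?S1 th om)"
        by (simp add: inner sum.distrib sum_distrib_left) (rule sum.swap)
      also have "\<dots> = ActCost (G \<pi> n) mu a"
        unfolding ActCost_def Inl G_def
        by (simp add: Mbar_eq Mpost_eq simplex_sum[OF mu] bayes[OF wd_nn simplex_nn[OF mu]] bayes[OF wo_nn simplex_nn[OF mu]])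
      finally show ?thesis .
    qed
  qed
  finally show ?thesis .
qed

abbreviation SS :: "(real^'th) set" where "SS \<equiv> belief_simplex"

lemma simplex_convex: "convex SS"
  unfolding convex_def belief_simplex_def
  by (auto simp: sum.distrib sum_distrib_left[symmetric])

lemma Zw_nn: "(\<And>th. 0 \<le> w th) \<Longrightarrow> mu \<in> SS \<Longrightarrow> 0 \<le> Zw w mu"
  unfolding Zw_def by (auto intro!: sum_nonneg simp: simplex_nn)

lemma Mw_simplex:
  assumes w: "\<And>th. 0 \<le> w th" and mu: "mu \<in> SS" and Z: "Zw w mu \<noteq> 0"
  shows "Mw w mu \<in> SS"
proof -
  have Zp: "0 < Zw w mu" using Zw_nn[of w, OF w mu] Z by simp
  show ?thesis unfolding belief_simplex_def Mw_def
    using Zp w simplex_nn[OF mu]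
    by (auto simp: sum_divide_distrib[symmetric] Zw_def[symmetric])
qed

lemma Mw_scale:
  assumes w: "\<And>th. 0 \<le> w th" and mu: "\<And>th. 0 \<le> mu $ th"
  shows "Zw w mu * Mw w mu $ th = w th * mu $ th"
proof (cases "Zw w mu = 0")
  case True
  have "\<forall>th\<in>UNIV. w th * mu $ th = 0"
    using True unfolding Zw_def by (subst sum_nonneg_eq_0_iff[symmetric]) (auto intro: mult_nonneg_nonneg w mu)
  then show ?thesis using True by simp
qed (simp add: Mw_def)

lemma persp_mono:
  assumes w: "\<And>th. 0 \<le> w th" and mu: "mu \<in> SS" and fg: "\<And>x. x \<in> SS \<Longrightarrow> f x \<le> g x"
  shows "Zw w mu * f (Mw w mu) \<le> Zw w mu * g (Mw w mu)"
proof (cases "Zw w mu = 0")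
  case False
  then show ?thesis using Zw_nn[of w, OF w mu] Mw_simplex[of w, OF w mu False] fg by (simp add: mult_left_mono)
qed simp

lemma persp_nn:
  assumes w: "\<And>th. 0 \<le> w th" and mu: "mu \<in> SS" and f: "\<And>x. x \<in> SS \<Longrightarrow> 0 \<le> f x"
  shows "0 \<le> Zw w mu * f (Mw w mu)"
  using persp_mono[of w, OF w mu, of "\<lambda>_. 0" f] f by simp

lemma ActCost_mono:
  assumes mu: "mu \<in> SS" and f0: "\<And>x. x \<in> SS \<Longrightarrow> f x 0 \<le> g x 0"
    and f1: "\<And>x. x \<in> SS \<Longrightarrow> f x 1 \<le> g x 1"
  shows "ActCost f mu a \<le> ActCost g mu a"
proof (cases a)
  case (Inl l)
  have f1': "\<And>x. x \<in> SS \<Longrightarrow> f x (Suc 0) \<le> g x (Suc 0)" using f1 by simp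
  show ?thesis unfolding ActCost_def Inl
    by (auto intro!: add_mono sum_mono persp_mono[OF wd_nn mu] persp_mono[OF wo_nn mu] f0 f1 f1')
qed (simp add: ActCost_def)

lemma E0_nn: "mu \<in> SS \<Longrightarrow> 0 \<le> E0 mu"
  unfolding E0_def using eb_pos by (auto intro!: sum_nonneg simp: simplex_nn less_imp_le)

lemma ActCost_nn:
  assumes mu: "mu \<in> SS" and f0: "\<And>x. x \<in> SS \<Longrightarrow> 0 \<le> f x 0"
    and f1: "\<And>x. x \<in> SS \<Longrightarrow> 0 \<le> f x 1"
  shows "0 \<le> ActCost f mu a"
proof (cases a)
  case (Inl l)
  have "0 \<le> ec l * c l" using ec_pos[of l] c_pos[of l] by simp
  moreover have f1': "\<And>x. x \<in> SS \<Longrightarrow> 0 \<le> f x (Suc 0)" using f1 by simp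
  ultimately show ?thesis unfolding ActCost_def Inl
    by (auto intro!: add_nonneg_nonneg sum_nonneg persp_nn[OF wd_nn mu] persp_nn[OF wo_nn mu] f0 f1 f1')
next
  case (Inr thh)
  then show ?thesis unfolding ActCost_def using ea_pos
    by (auto intro!: sum_nonneg simp: simplex_nn[OF mu] less_imp_le)
qed

lemma Min_le_avg:
  fixes M :: "'a::finite pmf" and x :: "'a \<Rightarrow> real"
  shows "Min (range x) \<le> (\<Sum>a\<in>UNIV. pmf M a * x a)"
proof -
  have "(\<Sum>a\<in>UNIV. pmf M a * Min (range x)) \<le> (\<Sum>a\<in>UNIV. pmf M a * x a)"
    by (intro sum_mono mult_left_mono) auto
  moreover have "(\<Sum>a\<in>UNIV. pmf M a * Min (range x)) = Min (range x)"
    by (simp add: sum_distrib_right[symmetric] sum_pmf_eq_1)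
  ultimately show ?thesis by simp
qed

lemma Min_range_mono:
  fixes f g :: "'a::finite \<Rightarrow> real"
  assumes "\<And>a. f a \<le> g a"
  shows "Min (range f) \<le> Min (range g)"
proof -
  have "Min (range g) \<in> range g" by (rule Min_in) auto
  then obtain a where "Min (range g) = g a" by blast
  moreover have "Min (range f) \<le> f a" by (rule Min_le) auto
  ultimately show ?thesis using assms[of a] by linarith
qed

primrec U :: "nat \<Rightarrow> real^'th \<Rightarrow> nat \<Rightarrow> real" where
  "U 0 = (\<lambda>mu nu. 0)"
| "U (Suc n) = (\<lambda>mu nu. if nu = 0 then E0 mu else Min (range (ActCost (U n) mu)))"

lemma U_le_G: "mu \<in> SS \<Longrightarrow> nu \<in> {0, 1} \<Longrightarrow> U n mu nu \<le> G \<pi> n mu nu"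
proof (induction n arbitrary: mu nu)
  case 0
  then show ?case by simp
next
  case (Suc n)
  show ?case
  proof (cases "nu = 0")
    case True
    then show ?thesis by (simp add: G_Suc0)
  next
    case False
    then have nu: "nu = 1" using Suc.prems by simp
    have "U (Suc n) mu nu = Min (range (ActCost (U n) mu))" using nu by simp
    also have "\<dots> \<le> Min (range (ActCost (G \<pi> n) mu))"
      by (intro Min_range_mono ActCost_mono Suc.prems(1) Suc.IH) auto
    also have "\<dots> \<le> G \<pi> (Suc n) mu nu"
      unfolding nu G_Suc1[OF Suc.prems(1)] by (rule Min_le_avg)
    finally show ?thesis .
  qed
qed

lemma Min_range_nn: "(\<And>a. 0 \<le> (f::'a::finite \<Rightarrow> real) a) \<Longrightarrow> 0 \<le> Min (range f)"
  by (subst Min_ge_iff) auto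

lemma U_nn: "mu \<in> SS \<Longrightarrow> 0 \<le> U n mu nu"
proof (induction n arbitrary: mu nu)
  case (Suc n)
  then show ?case
    by (auto simp: E0_nn intro!: Min_range_nn ActCost_nn)
qed simp

lemma U_mono: "mu \<in> SS \<Longrightarrow> U n mu nu \<le> U (Suc n) mu nu"
proof (induction n arbitrary: mu nu)
  case 0
  then show ?case using U_nn[OF 0, of "Suc 0" nu] by simp
next
  case (Suc n)
  show ?case
  proof (cases "nu = 0")
    case False
    have "Min (range (ActCost (U n) mu)) \<le> Min (range (ActCost (U (Suc n)) mu))"
      by (intro Min_range_mono ActCost_mono Suc.prems Suc.IH)
    then show ?thesis using False by (simp only: U.simps(2) if_False)
  qed simp
qed

definition EA :: "real^'th \<Rightarrow> real" where "EA mu = (\<Sum>th\<in>UNIV. ea th * mu $ th)"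

lemma U_bound: "mu \<in> SS \<Longrightarrow> U n mu nu \<le> E0 mu + EA mu"
proof (cases n)
  case 0
  assume mu: "mu \<in> SS"
  have "0 \<le> EA mu" unfolding EA_def using ea_pos by (auto intro!: sum_nonneg simp: simplex_nn[OF mu] less_imp_le)
  then show ?thesis using 0 E0_nn[OF mu] by simp
next
  case (Suc m)
  assume mu: "mu \<in> SS"
  have EA: "0 \<le> EA mu" unfolding EA_def using ea_pos by (auto intro!: sum_nonneg simp: simplex_nn[OF mu] less_imp_le)
  obtain th0 :: 'th where True by simp
  have "Min (range (ActCost (U m) mu)) \<le> ActCost (U m) mu (Inr th0)" by (rule Min_le) auto
  also have "\<dots> \<le> EA mu" unfolding ActCost_def EA_def
    using ea_pos by (auto intro!: sum_mono2 simp: simplex_nn[OF mu] less_imp_le)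
  finally show ?thesis using Suc EA E0_nn[OF mu] by auto
qed

definition Uinf :: "real^'th \<Rightarrow> nat \<Rightarrow> real" where "Uinf mu nu = (SUP n. U n mu nu)"

lemma U_bdd: "mu \<in> SS \<Longrightarrow> bdd_above (range (\<lambda>n. U n mu nu))"
  by (rule bdd_aboveI2[where M="E0 mu + EA mu"]) (rule U_bound)

lemma U_lim: "mu \<in> SS \<Longrightarrow> (\<lambda>n. U n mu nu) \<longlonglongrightarrow> Uinf mu nu"
  unfolding Uinf_def by (rule LIMSEQ_incseq_SUP[OF U_bdd]) (auto intro!: incseq_SucI U_mono)

lemma U_le_Uinf: "mu \<in> SS \<Longrightarrow> U n mu nu \<le> Uinf mu nu"
  unfolding Uinf_def by (rule cSUP_upper[OF _ U_bdd]) auto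

lemma Uinf_nn: "mu \<in> SS \<Longrightarrow> 0 \<le> Uinf mu nu"
  using U_le_Uinf[of mu 0 nu] by simp

lemma Uinf0: "mu \<in> SS \<Longrightarrow> Uinf mu 0 = E0 mu"
proof -
  assume mu: "mu \<in> SS"
  have "(\<lambda>n. U (Suc n) mu 0) \<longlonglongrightarrow> Uinf mu 0" using LIMSEQ_Suc[OF U_lim[OF mu]] .
  moreover have "(\<lambda>n. U (Suc n) mu 0) \<longlonglongrightarrow> E0 mu" by simp
  ultimately show ?thesis by (rule LIMSEQ_unique)
qed

lemma tendsto_Min_fin:
  fixes X :: "nat \<Rightarrow> 'a \<Rightarrow> real"
  assumes "finite A" "A \<noteq> {}" "\<And>a. a \<in> A \<Longrightarrow> (\<lambda>n. X n a) \<longlonglongrightarrow> L a"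
  shows "(\<lambda>n. Min (X n ` A)) \<longlonglongrightarrow> Min (L ` A)"
  using assms
proof (induction A rule: finite_ne_induct)
  case (singleton x)
  then show ?case by simp
next
  case (insert x F)
  have "(\<lambda>n. min (X n x) (Min (X n ` F))) \<longlonglongrightarrow> min (L x) (Min (L ` F))"
    using insert by (intro tendsto_min) auto
  then show ?case using insert by (simp add: Min_insert)
qed

lemma persp_lim:
  assumes w: "\<And>th. 0 \<le> w th" and mu: "mu \<in> SS"
  shows "(\<lambda>n. Zw w mu * U n (Mw w mu) nu) \<longlonglongrightarrow> Zw w mu * Uinf (Mw w mu) nu"
proof (cases "Zw w mu = 0")
  case False
  then show ?thesis by (intro tendsto_mult_left U_lim Mw_simplex[OF w mu])
qed simp

lemma ActCost_lim: "mu \<in> SS \<Longrightarrow> (\<lambda>n. ActCost (U n) mu a) \<longlonglongrightarrow> ActCost Uinf mu a"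
  unfolding ActCost_def
  by (cases a) (auto intro!: tendsto_add tendsto_sum persp_lim wd_nn wo_nn)

lemma Uinf_fix: "mu \<in> SS \<Longrightarrow> nu \<noteq> 0 \<Longrightarrow> Uinf mu nu = Min (range (ActCost Uinf mu))"
proof -
  assume mu: "mu \<in> SS" and nu: "nu \<noteq> 0"
  have "(\<lambda>n. U (Suc n) mu nu) \<longlonglongrightarrow> Uinf mu nu" using LIMSEQ_Suc[OF U_lim[OF mu]] .
  moreover have "(\<lambda>n. U (Suc n) mu nu) \<longlonglongrightarrow> Min (range (ActCost Uinf mu))"
    using nu by (simp del: U.simps(2)) (auto intro!: tendsto_Min_fin ActCost_lim mu)
  ultimately show ?thesis by (rule LIMSEQ_unique)
qed

lemma Zw_lin: "Zw w (u *\<^sub>R x + v *\<^sub>R y) = u * Zw w x + v * Zw w y"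
  by (simp add: Zw_def sum.distrib sum_distrib_left algebra_simps)

lemma concave_persp:
  assumes w: "\<And>th. 0 \<le> w th" and f: "concave_on SS f"
  shows "concave_on SS (\<lambda>mu. Zw w mu * f (Mw w mu))"
  unfolding concave_on_iff
proof (intro conjI ballI allI impI simplex_convex)
  fix x y :: "real^'th" and u v :: real
  assume x: "x \<in> SS" and y: "y \<in> SS" and u: "0 \<le> u" and v: "0 \<le> v" and uv: "u + v = 1"
  let ?m = "u *\<^sub>R x + v *\<^sub>R y"
  have m: "?m \<in> SS" using simplex_convex x y u v uv by (rule convexD)
  define \<alpha> where "\<alpha> = u * Zw w x"
  define \<beta> where "\<beta> = v * Zw w y"
  have a0: "0 \<le> \<alpha>" unfolding \<alpha>_def using u Zw_nn[of w, OF w x] by simp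
  have b0: "0 \<le> \<beta>" unfolding \<beta>_def using v Zw_nn[of w, OF w y] by simp
  have Zm: "Zw w ?m = \<alpha> + \<beta>" by (simp add: Zw_lin \<alpha>_def \<beta>_def)
  have comb: "(\<alpha> + \<beta>) * Mw w ?m $ th = \<alpha> * Mw w x $ th + \<beta> * Mw w y $ th" for th
  proof -
    have "(\<alpha> + \<beta>) * Mw w ?m $ th = w th * ?m $ th"
      using Mw_scale[of w, OF w simplex_nn[OF m]] Zm by simp
    also have "\<dots> = u * (w th * x $ th) + v * (w th * y $ th)" by (simp add: algebra_simps)
    also have "\<dots> = u * (Zw w x * Mw w x $ th) + v * (Zw w y * Mw w y $ th)"
      using Mw_scale[of w, OF w simplex_nn[OF x]] Mw_scale[of w, OF w simplex_nn[OF y]] by simp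
    finally show ?thesis by (simp add: \<alpha>_def \<beta>_def algebra_simps)
  qed
  have goal: "\<alpha> * f (Mw w x) + \<beta> * f (Mw w y) \<le> (\<alpha> + \<beta>) * f (Mw w ?m)"
  proof (cases "\<alpha> = 0")
    case True
    show ?thesis
    proof (cases "\<beta> = 0")
      case False
      have "Mw w ?m = Mw w y" using comb True False by (simp add: vec_eq_iff)
      then show ?thesis using True by simp
    qed (simp add: True)
  next
    case aF: False
    show ?thesis
    proof (cases "\<beta> = 0")
      case True
      have "Mw w ?m = Mw w x" using comb True aF by (simp add: vec_eq_iff)
      then show ?thesis using True by simp
    next
      case bF: False
      have Zx: "Zw w x \<noteq> 0" using aF by (auto simp: \<alpha>_def)
      have Zy: "Zw w y \<noteq> 0" using bF by (auto simp: \<beta>_def)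
      have Mx: "Mw w x \<in> SS" by (rule Mw_simplex[of w, OF w x Zx])
      have My: "Mw w y \<in> SS" by (rule Mw_simplex[of w, OF w y Zy])
      have Zp: "0 < \<alpha> + \<beta>" using a0 b0 aF by simp
      have eqm: "Mw w ?m = (\<alpha> / (\<alpha> + \<beta>)) *\<^sub>R Mw w x + (\<beta> / (\<alpha> + \<beta>)) *\<^sub>R Mw w y"
      proof -
        have "Mw w ?m $ i = (\<alpha> / (\<alpha> + \<beta>)) * Mw w x $ i + (\<beta> / (\<alpha> + \<beta>)) * Mw w y $ i" for i
        proof -
          have "Mw w ?m $ i = ((\<alpha> + \<beta>) * Mw w ?m $ i) / (\<alpha> + \<beta>)" using Zp by simp
          also have "\<dots> = (\<alpha> * Mw w x $ i + \<beta> * Mw w y $ i) / (\<alpha> + \<beta>)" by (simp only: comb)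
          also have "\<dots> = (\<alpha> / (\<alpha> + \<beta>)) * Mw w x $ i + (\<beta> / (\<alpha> + \<beta>)) * Mw w y $ i"
            by (simp add: add_divide_distrib)
          finally show ?thesis .
        qed
        then show ?thesis by (simp add: vec_eq_iff)
      qed
      have "(\<alpha> / (\<alpha> + \<beta>)) * f (Mw w x) + (\<beta> / (\<alpha> + \<beta>)) * f (Mw w y) \<le> f (Mw w ?m)"
      proof -
        have key: "\<forall>x\<in>SS. \<forall>y\<in>SS. \<forall>u\<ge>0. \<forall>v\<ge>0. u + v = 1 \<longrightarrow> u * f x + v * f y \<le> f (u *\<^sub>R x + v *\<^sub>R y)"
          using f unfolding concave_on_iff by blast
        have s1: "\<alpha> / (\<alpha> + \<beta>) + \<beta> / (\<alpha> + \<beta>) = 1" using Zp by (simp add: add_divide_distrib[symmetric])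
        have n1: "0 \<le> \<alpha> / (\<alpha> + \<beta>)" "0 \<le> \<beta> / (\<alpha> + \<beta>)" using a0 b0 Zp by auto
        show ?thesis unfolding eqm using key[rule_format, OF Mx My n1 s1] .
      qed
      then have "(\<alpha> + \<beta>) * ((\<alpha> / (\<alpha> + \<beta>)) * f (Mw w x) + (\<beta> / (\<alpha> + \<beta>)) * f (Mw w y))
          \<le> (\<alpha> + \<beta>) * f (Mw w ?m)"
        using Zp by (intro mult_left_mono) auto
      moreover have "(\<alpha> + \<beta>) * ((\<alpha> / (\<alpha> + \<beta>)) * f (Mw w x) + (\<beta> / (\<alpha> + \<beta>)) * f (Mw w y))
          = ((\<alpha> + \<beta>) * (\<alpha> / (\<alpha> + \<beta>))) * f (Mw w x) + ((\<alpha> + \<beta>) * (\<beta> / (\<alpha> + \<beta>))) * f (Mw w y)"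
        by (simp only: distrib_left mult.assoc)
      moreover have "(\<alpha> + \<beta>) * (\<alpha> / (\<alpha> + \<beta>)) = \<alpha>" "(\<alpha> + \<beta>) * (\<beta> / (\<alpha> + \<beta>)) = \<beta>"
        using Zp by auto
      ultimately show ?thesis by simp
    qed
  qed
  show "u * (Zw w x * f (Mw w x)) + v * (Zw w y * f (Mw w y)) \<le> Zw w ?m * f (Mw w ?m)"
    using goal Zm by (simp add: \<alpha>_def \<beta>_def mult.assoc)
qed

lemma concave_lin: "concave_on SS (\<lambda>mu. \<Sum>th\<in>A. k th * mu $ th)"
  unfolding concave_on_iff
  by (auto simp: simplex_convex sum.distrib sum_distrib_left algebra_simps)

lemma concave_sum_fun:
  assumes "finite I" "\<And>i. i \<in> I \<Longrightarrow> concave_on SS (f i)"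
  shows "concave_on SS (\<lambda>x. \<Sum>i\<in>I. f i x)"
  using assms
proof (induction I rule: finite_induct)
  case empty
  then show ?case by (simp add: concave_on_const simplex_convex)
next
  case (insert a I)
  then show ?case by (simp add: concave_on_add)
qed

lemma concave_Min_range:
  fixes f :: "'a::finite \<Rightarrow> real^'th \<Rightarrow> real"
  assumes "\<And>a. concave_on SS (f a)"
  shows "concave_on SS (\<lambda>x. Min (range (\<lambda>a. f a x)))"
  unfolding concave_on_iff
proof (intro conjI ballI allI impI simplex_convex)
  fix x y :: "real^'th" and u v :: real
  assume x: "x \<in> SS" and y: "y \<in> SS" and u: "0 \<le> u" and v: "0 \<le> v" and uv: "u + v = 1"
  let ?m = "u *\<^sub>R x + v *\<^sub>R y"
  have "Min (range (\<lambda>a. f a ?m)) \<in> range (\<lambda>a. f a ?m)" by (rule Min_in) auto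
  then obtain a where a: "Min (range (\<lambda>a. f a ?m)) = f a ?m" by blast
  have "u * f a x + v * f a y \<le> f a ?m" using assms[of a] x y u v uv unfolding concave_on_iff by auto
  moreover have "Min (range (\<lambda>a. f a x)) \<le> f a x" "Min (range (\<lambda>a. f a y)) \<le> f a y"
    by (auto intro!: Min_le)
  ultimately have "u * Min (range (\<lambda>a. f a x)) + v * Min (range (\<lambda>a. f a y)) \<le> f a ?m"
    using u v by (smt (verit) mult_left_mono)
  then show "u * Min (range (\<lambda>a. f a x)) + v * Min (range (\<lambda>a. f a y)) \<le> Min (range (\<lambda>a. f a ?m))"
    using a by simp
qed

lemma ActCost_concave:
  assumes f0: "concave_on SS (\<lambda>x. f x 0)" and f1: "concave_on SS (\<lambda>x. f x 1)"
  shows "concave_on SS (\<lambda>mu. ActCost f mu a)"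
proof (cases a)
  case (Inl l)
  have p0: "concave_on SS (\<lambda>mu. Zw (wd l) mu * f (Mw (wd l) mu) 0)"
    by (rule concave_persp[of "wd l" "\<lambda>x. f x 0", OF wd_nn f0])
  have p1: "concave_on SS (\<lambda>mu. Zw (wo l om) mu * f (Mw (wo l om) mu) 1)" for om
    by (rule concave_persp[of "wo l om" "\<lambda>x. f x 1", OF wo_nn f1])
  show ?thesis unfolding ActCost_def Inl sum.case
    by (intro concave_on_add concave_sum_fun p0 p1) (auto simp: concave_on_const simplex_convex)
next
  case (Inr thh)
  show ?thesis unfolding ActCost_def Inr sum.case by (rule concave_lin)
qed

lemma U_concave: "concave_on SS (\<lambda>mu. U n mu nu)"
proof (induction n arbitrary: nu)
  case 0
  then show ?case by (simp add: concave_on_const simplex_convex)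
next
  case (Suc n)
  show ?case
  proof (cases "nu = 0")
    case True
    then show ?thesis by (simp add: E0_def concave_lin)
  next
    case False
    have "concave_on SS (\<lambda>x. Min (range (\<lambda>a. ActCost (U n) x a)))"
      by (intro concave_Min_range ActCost_concave Suc.IH)
    then show ?thesis using False by simp
  qed
qed

lemma Uinf_concave: "concave_on SS (\<lambda>mu. Uinf mu nu)"
  unfolding concave_on_iff
proof (intro conjI ballI allI impI simplex_convex)
  fix x y :: "real^'th" and u v :: real
  assume x: "x \<in> SS" and y: "y \<in> SS" and u: "0 \<le> u" and v: "0 \<le> v" and uv: "u + v = 1"
  let ?m = "u *\<^sub>R x + v *\<^sub>R y"
  have m: "?m \<in> SS" using simplex_convex x y u v uv by (rule convexD)
  show "u * Uinf x nu + v * Uinf y nu \<le> Uinf ?m nu"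
  proof (rule LIMSEQ_le)
    show "(\<lambda>n. u * U n x nu + v * U n y nu) \<longlonglongrightarrow> u * Uinf x nu + v * Uinf y nu"
      by (intro tendsto_intros U_lim x y)
    show "(\<lambda>n. U n ?m nu) \<longlonglongrightarrow> Uinf ?m nu" by (rule U_lim[OF m])
    show "\<exists>N. \<forall>n\<ge>N. u * U n x nu + v * U n y nu \<le> U n ?m nu"
      using U_concave x y u v uv unfolding concave_on_iff by blast
  qed
qed

definition astar :: "real^'th \<Rightarrow> 'la + 'th" where
  "astar mu = (SOME a. ActCost Uinf mu a = Min (range (ActCost Uinf mu)))"

lemma astar: "ActCost Uinf mu (astar mu) = Min (range (ActCost Uinf mu))"
proof -
  have "Min (range (ActCost Uinf mu)) \<in> range (ActCost Uinf mu)" by (rule Min_in) auto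
  then have "\<exists>a. ActCost Uinf mu a = Min (range (ActCost Uinf mu))" by (metis rangeE)
  then show ?thesis unfolding astar_def by (rule someI_ex)
qed

definition pis :: "('th, 'la) strategy" where "pis mu nu = return_pmf (astar mu)"

lemma sum_return: "(\<Sum>a\<in>UNIV. pmf (return_pmf (b::'a::finite)) a * (x a :: real)) = x b"
proof -
  have "(\<Sum>a\<in>UNIV. pmf (return_pmf b) a * x a) = (\<Sum>a\<in>UNIV. if a = b then x b else 0)"
    by (intro sum.cong) (auto simp: pmf_return)
  also have "\<dots> = x b" by (subst sum.delta) auto
  finally show ?thesis .
qed

lemma G_pis_le: "mu \<in> SS \<Longrightarrow> nu \<in> {0, 1} \<Longrightarrow> G pis n mu nu \<le> Uinf mu nu"
proof (induction n arbitrary: mu nu)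
  case 0
  then show ?case using Uinf_nn by simp
next
  case (Suc n)
  show ?case
  proof (cases "nu = 0")
    case True
    then show ?thesis using Suc.prems by (simp add: G_Suc0 Uinf0)
  next
    case False
    then have nu: "nu = 1" using Suc.prems by simp
    have "G pis (Suc n) mu 1 = ActCost (G pis n) mu (astar mu)"
      unfolding G_Suc1[OF Suc.prems(1)] pis_def by (rule sum_return)
    also have "\<dots> \<le> ActCost Uinf mu (astar mu)"
      by (intro ActCost_mono Suc.prems(1) Suc.IH) auto
    also have "\<dots> = Uinf mu 1" using Uinf_fix[OF Suc.prems(1), of 1] astar by simp
    finally show ?thesis using nu by simp
  qed
qed

lemma stage_nn: "x \<in> set_pmf (stp \<pi> s) \<Longrightarrow> 0 \<le> fst x"
proof -
  assume x: "x \<in> set_pmf (stp \<pi> s)"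
  obtain th mu nu dn where s: "s = (th, mu, nu, dn)" by (cases s) auto
  have "0 \<le> ec l * c l" for l using ec_pos[of l] c_pos[of l] by simp
  then show ?thesis using x ea_pos eb_pos unfolding s step_def
    apply (auto simp: set_bind_pmf less_imp_le split: if_splits)
    subgoal for a by (cases a) (auto simp: less_imp_le split: if_splits)
    done
qed

lemma e_nn: "0 \<le> measure_pmf.expectation (stp \<pi> s) fst"
  by (rule integral_nonneg_AE) (auto intro!: AE_pmfI stage_nn)

lemma et_nn: "0 \<le> measure_pmf.expectation (sd \<pi> s t) (\<lambda>s'. measure_pmf.expectation (stp \<pi> s') fst)"
  by (rule integral_nonneg_AE) (auto intro!: AE_I2 e_nn)

lemma S_nn: "0 \<le> S \<pi> n s"
  unfolding S_def by (auto intro!: sum_nonneg et_nn)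

lemma S_mono: "S \<pi> n s \<le> S \<pi> (Suc n) s"
  unfolding S_def using et_nn by simp

lemma loss_SUP: "loss_given p q c ea eb ec \<pi> s = (SUP n. ennreal (S \<pi> n s))"
  unfolding loss_given_def S_def
  by (subst suminf_eq_SUP) (simp add: et_nn)

lemma togo_ge: "mu \<in> SS \<Longrightarrow> ennreal (G \<pi> n mu nu) \<le> togo p q c ea eb ec \<pi> mu nu"
proof -
  assume mu: "mu \<in> SS"
  have "ennreal (G \<pi> n mu nu) = (\<Sum>th\<in>UNIV. ennreal (mu $ th) * ennreal (S \<pi> n (th, mu, nu, False)))"
    unfolding G_def using simplex_nn[OF mu] S_nn
    by (subst sum_ennreal[symmetric]) (auto intro!: sum.cong simp: ennreal_mult)
  also have "\<dots> \<le> togo p q c ea eb ec \<pi> mu nu"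
    unfolding togo_def loss_SUP
    by (intro sum_mono mult_left_mono) (auto intro: SUP_upper)
  finally show ?thesis .
qed

lemma togo_pis: "mu \<in> SS \<Longrightarrow> togo p q c ea eb ec pis mu nu = (SUP n. ennreal (G pis n mu nu))"
proof -
  assume mu: "mu \<in> SS"
  have "togo p q c ea eb ec pis mu nu = (\<Sum>th\<in>UNIV. SUP n. ennreal (mu $ th) * ennreal (S pis n (th, mu, nu, False)))"
    unfolding togo_def loss_SUP by (simp add: SUP_mult_left_ennreal)
  also have "\<dots> = (SUP n. \<Sum>th\<in>UNIV. ennreal (mu $ th) * ennreal (S pis n (th, mu, nu, False)))"
    by (rule ennreal_SUP_sum[symmetric])
       (auto intro!: incseq_SucI mult_left_mono ennreal_leI S_mono)
  also have "\<dots> = (SUP n. ennreal (G pis n mu nu))"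
    unfolding G_def using simplex_nn[OF mu] S_nn
    by (subst sum_ennreal[symmetric]) (auto intro!: sum.cong SUP_cong simp: ennreal_mult)
  finally show ?thesis .
qed

lemma Vstar_eq:
  assumes mu: "mu \<in> SS" and nu: "nu \<in> {0, 1}"
  shows "Vstar p q c ea eb ec mu nu = Uinf mu nu"
proof -
  have "(INF \<pi>. togo p q c ea eb ec \<pi> mu nu) = ennreal (Uinf mu nu)"
  proof (rule antisym)
    have "(INF \<pi>. togo p q c ea eb ec \<pi> mu nu) \<le> togo p q c ea eb ec pis mu nu" by (rule INF_lower) simp
    also have "\<dots> \<le> ennreal (Uinf mu nu)"
      unfolding togo_pis[OF mu] by (intro SUP_least ennreal_leI G_pis_le mu nu)
    finally show "(INF \<pi>. togo p q c ea eb ec \<pi> mu nu) \<le> ennreal (Uinf mu nu)" .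
  next
    show "ennreal (Uinf mu nu) \<le> (INF \<pi>. togo p q c ea eb ec \<pi> mu nu)"
    proof (rule INF_greatest)
      fix \<pi> :: "('th, 'la) strategy"
      have le: "ennreal (U n mu nu) \<le> togo p q c ea eb ec \<pi> mu nu" for n
        using ennreal_leI[OF U_le_G[OF mu nu, of n \<pi>]] togo_ge[OF mu, of \<pi> n nu] by simp
      show "ennreal (Uinf mu nu) \<le> togo p q c ea eb ec \<pi> mu nu"
      proof (cases "togo p q c ea eb ec \<pi> mu nu")
        case (real r)
        have "U n mu nu \<le> r" for n using le[of n] real U_nn[OF mu, of n nu] by simp
        then have "Uinf mu nu \<le> r" unfolding Uinf_def by (intro cSUP_least) auto
        then show ?thesis using real by (simp add: ennreal_leI)
      qed simp
    qed
  qed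
  then show ?thesis unfolding Vstar_def using Uinf_nn[OF mu] by simp
qed

abbreviation "V \<equiv> Vstar p q c ea eb ec"

lemma concave_cong_SS:
  assumes "\<And>x. x \<in> SS \<Longrightarrow> f x = g x" and "concave_on SS f"
  shows "concave_on SS g"
  using assms unfolding concave_on_iff
  by (metis (no_types, lifting) convexD)

lemma V_nn: "0 \<le> V mu nu" by (simp add: Vstar_def)

lemma V_concave: "nu \<in> {0, 1} \<Longrightarrow> concave_on SS (\<lambda>mu. V mu nu)"
  by (rule concave_cong_SS[OF _ Uinf_concave]) (simp add: Vstar_eq)

lemma Qacq1: "Qstar_acq p q c ea eb ec l mu 1 = ActCost V mu (Inl l)"
  by (simp add: Qstar_acq_def ActCost_def Mbar_eq Mpost_eq Zw_def wd_def wo_def mult.commute)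

lemma Qacq0: "Qstar_acq p q c ea eb ec l mu 0 = V mu 0 + ec l * c l"
  by (simp add: Qstar_acq_def)

lemma Qstar_Min: "Qstar p q c ea eb ec mu nu = Min (range (\<lambda>l. Qstar_acq p q c ea eb ec l mu nu))"
  unfolding Qstar_def by (rule cInf_eq_Min) auto

lemma Qbar_Min: "Qbar ea eb mu nu = Min (range (\<lambda>thh. Qbar_dec ea eb thh mu nu))"
  unfolding Qbar_def by (rule cInf_eq_Min) auto

lemma Qacq_concave:
  assumes nu: "nu \<in> {0, 1}"
  shows "concave_on SS (\<lambda>mu. Qstar_acq p q c ea eb ec l mu nu)"
proof (cases "nu = 0")
  case True
  have "concave_on SS (\<lambda>mu. (\<Sum>th\<in>UNIV. eb th * mu $ th) + ec l * c l)"
    by (intro concave_on_add concave_lin) (simp add: concave_on_const simplex_convex)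
  then show ?thesis
    by (rule concave_cong_SS[rotated]) (simp add: True Qacq0 Vstar_eq Uinf0 E0_def)
next
  case False
  then have nu1: "nu = 1" using nu by simp
  show ?thesis unfolding nu1 Qacq1
    by (intro ActCost_concave V_concave) auto
qed

lemma Qstar_concave: "nu \<in> {0, 1} \<Longrightarrow> concave_on SS (\<lambda>mu. Qstar p q c ea eb ec mu nu)"
  unfolding Qstar_Min by (intro concave_Min_range Qacq_concave)

lemma vertex_comp: "vertex th $ i = (if i = th then 1 else 0)"
  by (simp add: vertex_def axis_def)

lemma vertex_SS: "vertex th \<in> SS"
  unfolding belief_simplex_def by (simp add: vertex_comp)

lemma Qbar_dec_vertex0: "Qbar_dec ea eb thh (vertex th) 0 = eb th"
  by (simp add: Qbar_dec_def vertex_comp if_distrib cong: if_cong)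

lemma Qbar_dec_vertex1: "Qbar_dec ea eb thh (vertex th) 1 = (if thh = th then 0 else ea th)"
  by (auto simp: Qbar_dec_def vertex_comp if_distrib cong: if_cong)

lemma Qbar_dec_self: "nu \<in> {0, 1} \<Longrightarrow> Qbar_dec ea eb thh (vertex thh) nu = Qbar ea eb (vertex thh) nu"
proof -
  assume nu: "nu \<in> {0, 1}"
  have le: "Qbar_dec ea eb thh (vertex thh) nu \<le> Qbar_dec ea eb thh' (vertex thh) nu" for thh'
  proof (cases "nu = 0")
    case True
    then show ?thesis by (simp add: Qbar_dec_vertex0)
  next
    case False
    then have nu1: "nu = 1" using nu by simp
    show ?thesis unfolding nu1 Qbar_dec_vertex1 using ea_pos[of thh] by simp
  qed
  show ?thesis unfolding Qbar_Min
    by (rule antisym) (auto intro!: Min_le simp: Min_ge_iff le)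
qed

lemma Qstar_gt: "nu \<in> {0, 1} \<Longrightarrow> Qbar ea eb (vertex th) nu < Qstar p q c ea eb ec (vertex th) nu"
proof -
  assume nu: "nu \<in> {0, 1}"
  have Qb: "Qbar ea eb (vertex th) nu = Qbar_dec ea eb th (vertex th) nu" using Qbar_dec_self[OF nu] by simp
  have "Qbar_dec ea eb th (vertex th) nu < Qstar_acq p q c ea eb ec l (vertex th) nu" for l
  proof (cases "nu = 0")
    case True
    have "V (vertex th) 0 = eb th"
      using Vstar_eq[OF vertex_SS, of 0 th] Uinf0[OF vertex_SS] by (simp add: E0_def vertex_comp if_distrib cong: if_cong)
    then show ?thesis using True ec_pos[of l] c_pos[of l] by (simp add: Qbar_dec_vertex0 Qacq0)
  next
    case False
    then have nu1: "nu = 1" using nu by simp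
    have "0 < ec l * c l" using ec_pos[of l] c_pos[of l] by simp
    moreover have "0 \<le> Zw (wd l) (vertex th) * V (Mw (wd l) (vertex th)) 0"
      by (intro persp_nn wd_nn vertex_SS V_nn)
    moreover have "0 \<le> (\<Sum>om\<in>UNIV. Zw (wo l om) (vertex th) * V (Mw (wo l om) (vertex th)) 1)"
      by (intro sum_nonneg persp_nn wo_nn vertex_SS V_nn)
    ultimately show ?thesis unfolding nu1 Qbar_dec_vertex1 Qacq1 ActCost_def
      by simp
  qed
  then show ?thesis unfolding Qb Qstar_Min by (subst Min_gr_iff) auto
qed

lemma Qbar_dec_lin: "Qbar_dec ea eb thh (u *\<^sub>R x + v *\<^sub>R y) nu = u * Qbar_dec ea eb thh x nu + v * Qbar_dec ea eb thh y nu"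
  by (simp add: Qbar_dec_def sum.distrib sum_distrib_left algebra_simps)

lemma main:
  assumes nu01: "nu \<in> {0, 1}"
  shows "concave_on belief_simplex (\<lambda>mu. Qstar p q c ea eb ec mu nu)
    \<and> (\<forall>th. Qstar p q c ea eb ec (vertex th) nu > Qbar ea eb (vertex th) nu)
    \<and> termination_set p q c ea eb ec nu =
           (\<Union>thh. {mu \<in> belief_simplex. Qstar p q c ea eb ec mu nu \<ge> Qbar_dec ea eb thh mu nu})
    \<and> (\<forall>thh. convex {mu \<in> belief_simplex. Qstar p q c ea eb ec mu nu \<ge> Qbar_dec ea eb thh mu nu})
    \<and> (\<forall>thh. vertex thh \<in> {mu \<in> belief_simplex. Qstar p q c ea eb ec mu nu \<ge> Qbar_dec ea eb thh mu nu})
    \<and> (\<forall>th. vertex th \<in> termination_set p q c ea eb ec nu)"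
proof (intro conjI allI)
  show cc: "concave_on belief_simplex (\<lambda>mu. Qstar p q c ea eb ec mu nu)" by (rule Qstar_concave[OF nu01])
  show "Qstar p q c ea eb ec (vertex th) nu > Qbar ea eb (vertex th) nu" for th by (rule Qstar_gt[OF nu01])
  show "termination_set p q c ea eb ec nu =
           (\<Union>thh. {mu \<in> belief_simplex. Qstar p q c ea eb ec mu nu \<ge> Qbar_dec ea eb thh mu nu})"
    unfolding termination_set_def Qbar_Min by (auto simp: Min_le_iff)
  show "convex {mu \<in> belief_simplex. Qstar p q c ea eb ec mu nu \<ge> Qbar_dec ea eb thh mu nu}" for thh
    unfolding convex_def
  proof (intro ballI allI impI)
    fix x y :: "real^'th" and u v :: real
    assume x: "x \<in> {mu \<in> belief_simplex. Qstar p q c ea eb ec mu nu \<ge> Qbar_dec ea eb thh mu nu}"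
      and y: "y \<in> {mu \<in> belief_simplex. Qstar p q c ea eb ec mu nu \<ge> Qbar_dec ea eb thh mu nu}"
      and u: "0 \<le> u" and v: "0 \<le> v" and uv: "u + v = 1"
    have m: "u *\<^sub>R x + v *\<^sub>R y \<in> SS" using simplex_convex x y u v uv by (intro convexD) auto
    have "u * Qstar p q c ea eb ec x nu + v * Qstar p q c ea eb ec y nu \<le> Qstar p q c ea eb ec (u *\<^sub>R x + v *\<^sub>R y) nu"
      using cc x y u v uv unfolding concave_on_iff by blast
    moreover have "u * Qbar_dec ea eb thh x nu \<le> u * Qstar p q c ea eb ec x nu"
      using x u by (intro mult_left_mono) auto
    moreover have "v * Qbar_dec ea eb thh y nu \<le> v * Qstar p q c ea eb ec y nu"
      using y v by (intro mult_left_mono) auto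
    ultimately show "u *\<^sub>R x + v *\<^sub>R y \<in> {mu \<in> belief_simplex. Qstar p q c ea eb ec mu nu \<ge> Qbar_dec ea eb thh mu nu}"
      using m by (simp add: Qbar_dec_lin)
  qed
  show "vertex thh \<in> {mu \<in> belief_simplex. Qstar p q c ea eb ec mu nu \<ge> Qbar_dec ea eb thh mu nu}" for thh
    using Qstar_gt[OF nu01, of thh] Qbar_dec_self[OF nu01, of thh] vertex_SS by simp
  show "vertex th \<in> termination_set p q c ea eb ec nu" for th
    using Qstar_gt[OF nu01, of th] vertex_SS by (simp add: termination_set_def)
qed

end

theorem proposition4:
  fixes p :: "'th::finite \<Rightarrow> 'la::finite \<Rightarrow> real"
    and q :: "'th \<Rightarrow> 'la \<Rightarrow> 'om::finite pmf"
    and c :: "'la \<Rightarrow> real"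
    and ea eb :: "'th \<Rightarrow> real" and ec :: "'la \<Rightarrow> real"
    and nu :: nat
  assumes p_bounds: "\<And>th l. 0 < p th l \<and> p th l < 1"
    and c_pos: "\<And>l. 0 < c l"
    and ea_pos: "\<And>th. 0 < ea th" and eb_pos: "\<And>th. 0 < eb th" and ec_pos: "\<And>l. 0 < ec l"
    and nu01: "nu \<in> {0, 1}"
  shows "concave_on belief_simplex (\<lambda>mu. Qstar p q c ea eb ec mu nu)
    \<and> (\<forall>th. Qstar p q c ea eb ec (vertex th) nu > Qbar ea eb (vertex th) nu)
    \<and> termination_set p q c ea eb ec nu =
           (\<Union>thh. {mu \<in> belief_simplex. Qstar p q c ea eb ec mu nu \<ge> Qbar_dec ea eb thh mu nu})
    \<and> (\<forall>thh. convex {mu \<in> belief_simplex. Qstar p q c ea eb ec mu nu \<ge> Qbar_dec ea eb thh mu nu})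
    \<and> (\<forall>thh. vertex thh \<in> {mu \<in> belief_simplex. Qstar p q c ea eb ec mu nu \<ge> Qbar_dec ea eb thh mu nu})
    \<and> (\<forall>th. vertex th \<in> termination_set p q c ea eb ec nu)"
proof -
  interpret tdp p q c ea eb ec
    using p_bounds c_pos ea_pos eb_pos ec_pos by unfold_locales auto
  show ?thesis by (rule main[OF nu01])
qed

end
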